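(* Let $m\in\mathbb N$, $m\ge1$, and $\varepsilon>0$. There exists a proper, convex, lower semicontinuous function $g:\mathbb R\to\mathbb R\cup\{+\infty\}$ such that $(\mathrm{abs}*M_{m,\varepsilon})(x)=\min_{y\in\mathbb R}\{\tfrac12(x-y)^2+g(y)\}$ for all $x\in\mathbb R$ if and only if $\varepsilon\ge2M_m(0)$.
   Context: $\mathrm{abs}(x)=|x|$. Centered cardinal B-splines: $M_1=\mathbf 1_{[-1/2,1/2]}$, $M_m=M_1*M_{m-1}$ for $m\ge2$; $M_{m,\varepsilon}(x):=\varepsilon^{-1}M_m(x/\varepsilon)$. The map $x\mapsto\min_y\{\frac12(x-y)^2+g(y)\}$ is the Moreau envelope of $g$. *)

theory Defs
  imports "HOL-Analysis.Analysis"
begin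

definition conv :: "(real \<Rightarrow> real) \<Rightarrow> (real \<Rightarrow> real) \<Rightarrow> real \<Rightarrow> real" where
  "conv f g x = (LINT y|lborel. f y * g (x - y))"

text \<open>Centered cardinal B-splines: bspline m = M_m for m \<ge> 1 (bspline 0 is unused junk).\<close>
fun bspline :: "nat \<Rightarrow> real \<Rightarrow> real" where
  "bspline 0 = (\<lambda>x. 0)"
| "bspline (Suc 0) = indicator {-1/2..1/2}"
| "bspline (Suc (Suc m)) = conv (indicator {-1/2..1/2}) (bspline (Suc m))"

definition bspline_scaled :: "nat \<Rightarrow> real \<Rightarrow> real \<Rightarrow> real" where
  "bspline_scaled m eps x = bspline m (x / eps) / eps"

definition proper_fun :: "(real \<Rightarrow> ereal) \<Rightarrow> bool" where
  "proper_fun g \<longleftrightarrow> (\<forall>y. g y \<noteq> -\<infinity>) \<and> (\<exists>y. g y < \<infinity>)"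

definition convex_fun :: "(real \<Rightarrow> ereal) \<Rightarrow> bool" where
  "convex_fun g \<longleftrightarrow> (\<forall>x y t. 0 \<le> t \<and> t \<le> 1 \<longrightarrow>
      g ((1 - t) * x + t * y) \<le> ereal (1 - t) * g x + ereal t * g y)"

definition lsc_fun :: "(real \<Rightarrow> ereal) \<Rightarrow> bool" where
  "lsc_fun g \<longleftrightarrow> (\<forall>x. g x \<le> Liminf (at x) g)"

definition is_moreau_min :: "(real \<Rightarrow> ereal) \<Rightarrow> real \<Rightarrow> ereal \<Rightarrow> bool" where
  "is_moreau_min g x v \<longleftrightarrow>
     (\<exists>y0. v = ereal ((x - y0)^2 / 2) + g y0) \<and> (\<forall>y. v \<le> ereal ((x - y)^2 / 2) + g y)"

end

theory Submission
  imports Defs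
begin


lemma aux: fixes fw fz fx a b z x w :: real
 assumes h1: "fw + a*(z-w) \<le> fz" and h2: "fz \<le> fx + b*(z-x) + (z-x)^2/2" and h3: "z = x - b + a"
 shows "fw + a*(x-b-w) + a^2/2 \<le> fx - b^2/2"
proof -
  have e1: "a*(z-w) = a*(x-b-w) + a*a" unfolding h3 by (simp add: algebra_simps)
  have e2: "b*(z-x) = a*b - b*b" unfolding h3 by (simp add: algebra_simps)
  have e3: "(z-x)^2 = a*a - 2*(a*b) + b*b" unfolding h3 by (simp add: power2_eq_square algebra_simps)
  have "a^2 = a*a" "b^2=b*b" by (simp_all add: power2_eq_square)
  then show ?thesis using h1 h2 e1 e2 e3 by linarith
qed

lemma moreau_from_tangent:
  fixes f s :: "real \<Rightarrow> real"
  assumes T1: "\<And>z w. f w + s w * (z - w) \<le> f z"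
    and T2: "\<And>z x. f z \<le> f x + s x * (z - x) + (z - x)^2/2"
  shows "\<exists>g. proper_fun g \<and> convex_fun g \<and> lsc_fun g \<and> (\<forall>x. is_moreau_min g x (ereal (f x)))"
proof -
  define t where "t w y = f w + s w * (y - w) + (s w)^2/2" for w y
  define g where "g y = (SUP w. ereal (t w y))" for y
  have ge: "ereal (t w y) \<le> g y" for w y unfolding g_def by (rule SUP_upper) simp
  have key: "t w (x - s x) \<le> f x - (s x)^2/2" for w x
  proof -
    define z where "z = x - s x + s w"
    have 1: "f w + s w * (z - w) \<le> f z" by (rule T1)
    have 2: "f z \<le> f x + s x * (z - x) + (z - x)^2/2" by (rule T2)
    show ?thesis unfolding t_def by (rule aux[OF 1 2 z_def])
  qed
  have gval: "g (x - s x) = ereal (f x - (s x)^2/2)" for x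
  proof (rule antisym)
    show "g (x - s x) \<le> ereal (f x - (s x)^2/2)" unfolding g_def
      by (rule SUP_least) (use key in simp)
    have "ereal (t x (x - s x)) \<le> g (x - s x)" by (rule ge)
    moreover have "t x (x - s x) = f x - (s x)^2/2" unfolding t_def by (simp add: power2_eq_square algebra_simps)
    ultimately show "ereal (f x - (s x)^2/2) \<le> g (x - s x)" by simp
  qed
  have proper: "proper_fun g" unfolding proper_fun_def
  proof
    show "\<forall>y. g y \<noteq> - \<infinity>"
    proof
      fix y have "ereal (t 0 y) \<le> g y" by (rule ge)
      then show "g y \<noteq> - \<infinity>" by auto
    qed
    show "\<exists>y. g y < \<infinity>" using gval[of 0] by (intro exI[of _ "0 - s 0"]) simp
  qed
  have convex: "convex_fun g" unfolding convex_fun_def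
  proof (intro allI impI)
    fix x y \<theta> :: real assume th: "0 \<le> \<theta> \<and> \<theta> \<le> 1"
    show "g ((1 - \<theta>) * x + \<theta> * y) \<le> ereal (1 - \<theta>) * g x + ereal \<theta> * g y"
      unfolding g_def[of "(1 - \<theta>) * x + \<theta> * y"]
    proof (rule SUP_least)
      fix w
      have "t w ((1 - \<theta>) * x + \<theta> * y) = (1 - \<theta>) * t w x + \<theta> * t w y"
        unfolding t_def by (simp add: field_simps)
      then have "ereal (t w ((1 - \<theta>) * x + \<theta> * y)) = ereal (1 - \<theta>) * ereal (t w x) + ereal \<theta> * ereal (t w y)"
        by simp
      also have "\<dots> \<le> ereal (1 - \<theta>) * g x + ereal \<theta> * g y"
        using th by (intro add_mono ereal_mult_left_mono ge) auto
      finally show "ereal (t w ((1 - \<theta>) * x + \<theta> * y)) \<le> ereal (1 - \<theta>) * g x + ereal \<theta> * g y" .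
    qed
  qed
  have lsc: "lsc_fun g" unfolding lsc_fun_def
  proof
    fix x
    show "g x \<le> Liminf (at x) g" unfolding g_def[of x]
    proof (rule SUP_least)
      fix w
      have c: "((\<lambda>y. ereal (t w y)) \<longlongrightarrow> ereal (t w x)) (at x)"
        unfolding t_def by (intro tendsto_intros)
      have "ereal (t w x) = Liminf (at x) (\<lambda>y. ereal (t w y))"
        by (rule lim_imp_Liminf[symmetric]) (use c in auto)
      also have "\<dots> \<le> Liminf (at x) g"
        by (rule Liminf_mono) (use ge in auto)
      finally show "ereal (t w x) \<le> Liminf (at x) g" .
    qed
  qed
  have mor: "is_moreau_min g x (ereal (f x))" for x
    unfolding is_moreau_min_def
  proof
    show "\<exists>y0. ereal (f x) = ereal ((x - y0)\<^sup>2 / 2) + g y0"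
      by (rule exI[of _ "x - s x"]) (simp add: gval)
    show "\<forall>y. ereal (f x) \<le> ereal ((x - y)\<^sup>2 / 2) + g y"
    proof
      fix y
      have "f x \<le> (x - y)^2/2 + t x y"
      proof -
        have "0 \<le> (y - x + s x)^2/2" by simp
        moreover have "(x-y)^2/2 + t x y - f x = (y - x + s x)^2/2"
          unfolding t_def power2_eq_square by (simp add: field_simps)
        ultimately show ?thesis by linarith
      qed
      then have "ereal (f x) \<le> ereal ((x - y)^2/2) + ereal (t x y)" by simp
      also have "\<dots> \<le> ereal ((x - y)^2/2) + g y" by (intro add_left_mono ge)
      finally show "ereal (f x) \<le> ereal ((x - y)\<^sup>2 / 2) + g y" .
    qed
  qed
  show ?thesis using proper convex lsc mor by blast
qed



context
  fixes B :: "real \<Rightarrow> real" and k :: real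
  assumes Bmeas: "B \<in> borel_measurable borel"
    and Bnn: "\<And>x. 0 \<le> B x" and Ble1: "\<And>x. B x \<le> 1"
    and Bsupp: "\<And>x. k < \<bar>x\<bar> \<Longrightarrow> B x = 0"
    and Bmono: "\<And>x x'. \<bar>x\<bar> \<le> \<bar>x'\<bar> \<Longrightarrow> B x' \<le> B x"
begin

lemma B_sint: "set_integrable lborel {a..b} B"
  unfolding set_integrable_def
proof (rule Bochner_Integration.integrable_bound[where f="indicator {a..b} :: real \<Rightarrow> real"])
  show "integrable lborel (indicator {a..b} :: real \<Rightarrow> real)" by (auto intro!: integrable_real_indicator simp: emeasure_lborel_Icc_eq)
  show "(\<lambda>x. indicator {a..b} x *\<^sub>R B x) \<in> borel_measurable lborel" using Bmeas by simp
  show "AE x in lborel. norm (indicator {a..b} x *\<^sub>R B x) \<le> norm (indicator {a..b} x :: real)"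
    using Bnn Ble1 by (auto simp: indicator_def)
qed

lemma B_intg: "B integrable_on {a..b}"
  using set_borel_integral_eq_integral(1)[OF B_sint] .

lemma B_conv: "conv (indicator {-1/2..1/2}) B x = integral {x-1/2..x+1/2} B"
proof -
  have "conv (indicator {-1/2..1/2}) B x = (\<integral>y. indicator {-1/2..1/2} y * B (x - y) \<partial>lborel)"
    by (simp add: conv_def)
  also have "\<dots> = (\<integral>u. indicator {-1/2..1/2} (x + -1 * u) * B (x - (x + -1 * u)) \<partial>lborel)"
    by (subst lborel_integral_real_affine[where c="-1" and t=x]) simp_all
  also have "\<dots> = (\<integral>u. indicator {x-1/2..x+1/2} u *\<^sub>R B u \<partial>lborel)"
    by (rule Bochner_Integration.integral_cong) (auto simp: indicator_def)
  also have "\<dots> = integral {x-1/2..x+1/2} B"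
    using set_borel_integral_eq_integral(2)[OF B_sint] unfolding set_lebesgue_integral_def .
  finally show ?thesis .
qed

lemma B_comb: "a \<le> b \<Longrightarrow> b \<le> c \<Longrightarrow> integral {a..c} B = integral {a..b} B + integral {b..c} B"
  using Henstock_Kurzweil_Integration.integral_combine[OF _ _ B_intg] by simp

lemma B_bnd: assumes "a \<le> b" shows "0 \<le> integral {a..b} B" "integral {a..b} B \<le> b - a"
proof -
  show "0 \<le> integral {a..b} B" by (rule Henstock_Kurzweil_Integration.integral_nonneg[OF B_intg]) (use Bnn in auto)
  have "integral {a..b} B \<le> integral {a..b} (\<lambda>_. 1::real)"
    by (rule integral_le[OF B_intg]) (use Ble1 in auto)
  then show "integral {a..b} B \<le> b - a" using assms by simp
qed

definition I where "I x = integral {x-1/2..x+1/2} B"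

lemma I_lip: "\<bar>I y - I x\<bar> \<le> \<bar>y - x\<bar>"
proof -
  have *: "\<bar>I y - I x\<bar> \<le> y - x" if "x \<le> y" for x y
  proof -
    have "integral {x-1/2..y+1/2} B = I x + integral {x+1/2..y+1/2} B"
      unfolding I_def using that by (intro B_comb) auto
    moreover have "integral {x-1/2..y+1/2} B = integral {x-1/2..y-1/2} B + I y"
      unfolding I_def using that by (intro B_comb) auto
    moreover have "0 \<le> integral {x+1/2..y+1/2} B" "integral {x+1/2..y+1/2} B \<le> y - x"
      using B_bnd[of "x+1/2" "y+1/2"] that by auto
    moreover have "0 \<le> integral {x-1/2..y-1/2} B" "integral {x-1/2..y-1/2} B \<le> y - x"
      using B_bnd[of "x-1/2" "y-1/2"] that by auto
    ultimately show ?thesis by linarith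
  qed
  show ?thesis using *[of x y] *[of y x] by (cases "x \<le> y") (auto simp: abs_minus_commute)
qed

lemma I_cont: "continuous_on UNIV I"
proof -
  have "isCont I x" for x
    unfolding continuous_at_eps_delta
  proof (intro allI impI)
    fix e :: real assume "0 < e"
    then show "\<exists>d>0. \<forall>x'. dist x' x < d \<longrightarrow> dist (I x') (I x) < e"
      using I_lip by (intro exI[of _ e]) (auto simp: dist_real_def intro: le_less_trans)
  qed
  then show ?thesis by (simp add: continuous_at_imp_continuous_on)
qed

lemma I_bnd: "0 \<le> I x" "I x \<le> 1"
  using B_bnd[of "x-1/2" "x+1/2"] unfolding I_def by auto

lemma I_supp: "k + 1 < \<bar>x\<bar> \<Longrightarrow> I x = 0"
proof -
  assume a: "k + 1 < \<bar>x\<bar>"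
  have "I x = integral {x-1/2..x+1/2} (\<lambda>_. 0::real)"
    unfolding I_def using a by (intro integral_cong Bsupp) auto
  then show ?thesis by simp
qed

lemma B_even: "B (-u) = B u"
  using Bmono[of u "-u"] Bmono[of "-u" u] by simp

lemma I_even: "I (-x) = I x"
proof -
  have "I (-x) = integral {-(x+1/2)..-(x-1/2)} (\<lambda>u. B (-u))"
    unfolding I_def by (simp add: B_even)
  also have "\<dots> = I x" unfolding I_def using Henstock_Kurzweil_Integration.integral_reflect_real[of "x+1/2" "x-1/2" B] by simp
  finally show ?thesis .
qed

lemma I_mono_pos: assumes "0 \<le> x" "x \<le> y" shows "I y \<le> I x"
proof -
  define d where "d = y - x"
  have "integral {x-1/2..y+1/2} B = I x + integral {x+1/2..y+1/2} B"
    unfolding I_def using assms by (intro B_comb) auto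
  moreover have "integral {x-1/2..y+1/2} B = integral {x-1/2..y-1/2} B + I y"
    unfolding I_def using assms by (intro B_comb) auto
  moreover have "integral {x+1/2..y+1/2} B \<le> integral {x-1/2..y-1/2} B"
  proof -
    have e1: "integral {0..d} (B \<circ> (+) (x+1/2)) = integral {x+1/2..y+1/2} B"
      using integral_shift_Icc_real[of 0 d B "x+1/2"] by (simp add: d_def)
    have e2: "integral {0..d} (B \<circ> (+) (x-1/2)) = integral {x-1/2..y-1/2} B"
      using integral_shift_Icc_real[of 0 d B "x-1/2"] by (simp add: d_def)
    have i1: "(B \<circ> (+) (x+1/2)) integrable_on {0..d}"
      using integrable_on_shift_cbox[of B "x+1/2" 0 d] B_intg by simp
    have i2: "(B \<circ> (+) (x-1/2)) integrable_on {0..d}"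
      using integrable_on_shift_cbox[of B "x-1/2" 0 d] B_intg by simp
    have "integral {0..d} (B \<circ> (+) (x+1/2)) \<le> integral {0..d} (B \<circ> (+) (x-1/2))"
    proof (rule integral_le[OF i1 i2])
      fix s assume "s \<in> {0..d}"
      then have "\<bar>x - 1/2 + s\<bar> \<le> \<bar>x + 1/2 + s\<bar>" using assms by auto
      then show "(B \<circ> (+) (x+1/2)) s \<le> (B \<circ> (+) (x-1/2)) s"
        by (simp add: Bmono)
    qed
    then show ?thesis using e1 e2 by simp
  qed
  ultimately show ?thesis by linarith
qed

lemma I_mono: "\<bar>x\<bar> \<le> \<bar>x'\<bar> \<Longrightarrow> I x' \<le> I x"
proof -
  assume a: "\<bar>x\<bar> \<le> \<bar>x'\<bar>"
  have ev: "I z = I \<bar>z\<bar>" for z using I_even[of z] by (cases "0 \<le> z") auto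
  show ?thesis using I_mono_pos[of "\<bar>x\<bar>" "\<bar>x'\<bar>"] a ev[of x] ev[of x'] by simp
qed

end



lemma bspline_props:
  "bspline (Suc n) \<in> borel_measurable borel \<and> (\<forall>x. 0 \<le> bspline (Suc n) x) \<and> (\<forall>x. bspline (Suc n) x \<le> 1)
   \<and> (\<forall>x. real (Suc n) < \<bar>x\<bar> \<longrightarrow> bspline (Suc n) x = 0)
   \<and> (\<forall>x x'. \<bar>x\<bar> \<le> \<bar>x'\<bar> \<longrightarrow> bspline (Suc n) x' \<le> bspline (Suc n) x) \<and> isCont (bspline (Suc n)) 0"
proof (induction n)
  case 0
  have c: "isCont (indicator {-1/2..1/2} :: real \<Rightarrow> real) 0"
    unfolding continuous_at_eps_delta
    by (intro allI impI exI[of _ "1/2"]) (auto simp: indicator_def dist_real_def)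
  have e: "bspline (Suc 0) = indicator {-1/2..1/2}" by simp
  show ?case unfolding e
  proof (intro conjI)
    show "isCont (indicator {-1/2..1/2} :: real \<Rightarrow> real) 0" by (rule c)
  qed (auto simp: indicator_def)
next
  case (Suc n)
  define B where "B = bspline (Suc n)"
  have Bm: "B \<in> borel_measurable borel" and Bn: "\<And>x. 0 \<le> B x" and B1: "\<And>x. B x \<le> 1"
    and Bs: "\<And>x. real (Suc n) < \<bar>x\<bar> \<Longrightarrow> B x = 0"
    and Bmo: "\<And>x x'. \<bar>x\<bar> \<le> \<bar>x'\<bar> \<Longrightarrow> B x' \<le> B x"
    using Suc.IH unfolding B_def by auto
  note ctx = Bm Bn B1 Bs Bmo
  have eq: "bspline (Suc (Suc n)) = I B"
    by (rule ext) (simp only: bspline.simps B_def[symmetric] B_conv[OF ctx] I_def[OF ctx])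
  have cont: "continuous_on UNIV (I B)" by (rule I_cont[OF ctx])
  have "I B \<in> borel_measurable borel" using cont by (rule borel_measurable_continuous_onI)
  moreover have "\<forall>x. 0 \<le> I B x" "\<forall>x. I B x \<le> 1" using I_bnd[OF ctx] by auto
  moreover have "\<forall>x. real (Suc (Suc n)) < \<bar>x\<bar> \<longrightarrow> I B x = 0" using I_supp[OF ctx] by simp
  moreover have "\<forall>x x'. \<bar>x\<bar> \<le> \<bar>x'\<bar> \<longrightarrow> I B x' \<le> I B x" using I_mono[OF ctx] by blast
  moreover have "isCont (I B) 0" using cont by (simp add: continuous_on_eq_continuous_at)
  ultimately show ?case unfolding eq by blast
qed



lemma uabs_deriv: "((\<lambda>u::real. u * \<bar>u\<bar>) has_real_derivative 2 * \<bar>x\<bar>) (at x)"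
proof (cases "x = 0")
  case True
  have "((\<lambda>y. (y * \<bar>y\<bar> - 0 * \<bar>0\<bar>) / (y - 0)) \<longlongrightarrow> 2 * \<bar>0::real\<bar>) (at 0)"
  proof (rule Lim_transform_eventually)
    show "((\<lambda>y::real. \<bar>y\<bar>) \<longlongrightarrow> 2 * \<bar>0::real\<bar>) (at 0)"
      by (simp add: tendsto_rabs_zero tendsto_ident_at)
    show "\<forall>\<^sub>F y::real in at 0. \<bar>y\<bar> = (y * \<bar>y\<bar> - 0 * \<bar>0\<bar>) / (y - 0)"
      unfolding eventually_at_filter by (rule always_eventually) (auto simp: nonzero_mult_div_cancel_left)
  qed
  then show ?thesis using True by (simp add: has_field_derivative_iff)
next
  case False
  show ?thesis
  proof (cases "x > 0")
    case True
    have "((\<lambda>u::real. u * u) has_real_derivative 2 * \<bar>x\<bar>) (at x)"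
      using True by (auto intro!: derivative_eq_intros)
    moreover have "eventually (\<lambda>u. u * u = u * \<bar>u\<bar>) (nhds x)"
      using eventually_nhds_in_open[of "{0<..}" x] True by (auto elim!: eventually_mono)
    ultimately show ?thesis using DERIV_cong_ev[of x x "\<lambda>u. u*u" "\<lambda>u. u * \<bar>u\<bar>"] by auto
  next
    case False
    then have n: "x < 0" using \<open>x \<noteq> 0\<close> by auto
    have "((\<lambda>u::real. - (u * u)) has_real_derivative 2 * \<bar>x\<bar>) (at x)"
      using n by (auto intro!: derivative_eq_intros)
    moreover have "eventually (\<lambda>u. - (u * u) = u * \<bar>u\<bar>) (nhds x)"
      using eventually_nhds_in_open[of "{..<0}" x] n by (auto elim!: eventually_mono)
    ultimately show ?thesis using DERIV_cong_ev[of x x "\<lambda>u. - (u*u)" "\<lambda>u. u * \<bar>u\<bar>"] by auto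
  qed
qed

lemma tri1: fixes a b :: real shows "a \<le> b \<Longrightarrow> (\<integral>u. indicator {a..b} u *\<^sub>R (b - u) \<partial>lborel) = (b - a)^2/2"
proof -
  assume ab: "a \<le> b"
  have "(\<integral>u. indicator {a..b} u *\<^sub>R (b - u) \<partial>lborel) = (b*b - b^2/2) - (b*a - a^2/2)"
    by (rule integral_FTC_atLeastAtMost[OF ab, where F="\<lambda>u. b*u - u^2/2"])
       (auto intro!: derivative_eq_intros continuous_intros simp: has_real_derivative_iff_has_vector_derivative[symmetric])
  then show ?thesis by (simp add: power2_eq_square field_simps)
qed

lemma tri2: fixes a b :: real shows "a \<le> b \<Longrightarrow> (\<integral>u. indicator {a..b} u *\<^sub>R (u - a) \<partial>lborel) = (b - a)^2/2"
proof -
  assume ab: "a \<le> b"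
  have "(\<integral>u. indicator {a..b} u *\<^sub>R (u - a) \<partial>lborel) = (b^2/2 - a*b) - (a^2/2 - a*a)"
    by (rule integral_FTC_atLeastAtMost[OF ab, where F="\<lambda>u. u^2/2 - a*u"])
       (auto intro!: derivative_eq_intros continuous_intros simp: has_real_derivative_iff_has_vector_derivative[symmetric])
  then show ?thesis by (simp add: power2_eq_square field_simps)
qed

lemma tent: fixes h C :: real shows "0 \<le> h \<Longrightarrow> (\<integral>u. indicator {-h..h} u *\<^sub>R (C * (h - \<bar>u\<bar>)) \<partial>lborel) = C * h^2"
proof -
  assume hh: "0 \<le> h"
  have d: "((\<lambda>u. C * (h * u - u * \<bar>u\<bar> / 2)) has_real_derivative C * (h - \<bar>x\<bar>)) (at x)" for x
  proof -
    have d1: "((\<lambda>u. h*u) has_real_derivative h) (at x)" by (auto intro!: derivative_eq_intros)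
    have d2: "((\<lambda>u. u*\<bar>u\<bar>/2) has_real_derivative 2*\<bar>x\<bar>/2) (at x)" by (rule DERIV_cdivide[OF uabs_deriv])
    have "((\<lambda>u. C*(h*u - u*\<bar>u\<bar>/2)) has_real_derivative C*(h - 2*\<bar>x\<bar>/2)) (at x)"
      by (rule DERIV_cmult[OF DERIV_diff[OF d1 d2]])
    then show ?thesis by simp
  qed
  have "(\<integral>u. indicator {-h..h} u *\<^sub>R (C * (h - \<bar>u\<bar>)) \<partial>lborel)
      = C * (h * h - h * \<bar>h\<bar> / 2) - C * (h * (-h) - (-h) * \<bar>-h\<bar> / 2)"
  proof (rule integral_FTC_atLeastAtMost[where F="\<lambda>u. C * (h * u - u * \<bar>u\<bar> / 2)"])
    show "- h \<le> h" using hh by simp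
    fix x assume "- h \<le> x" "x \<le> h"
    show "((\<lambda>u. C * (h * u - u * \<bar>u\<bar> / 2)) has_vector_derivative C * (h - \<bar>x\<bar>)) (at x within {- h..h})"
      using has_field_derivative_at_within[OF d[of x]]
      by (simp add: has_real_derivative_iff_has_vector_derivative[symmetric])
  next
    show "continuous_on {- h..h} (\<lambda>u. C * (h - \<bar>u\<bar>))" by (intro continuous_intros)
  qed
  then show ?thesis using hh by (simp add: power2_eq_square field_simps)
qed



context
  fixes M :: "real \<Rightarrow> real" and K R :: real
  assumes Mmeas: "M \<in> borel_measurable borel"
    and Mnn: "\<And>u. 0 \<le> M u" and MK: "\<And>u. M u \<le> K"
    and Msupp: "\<And>u. R < \<bar>u\<bar> \<Longrightarrow> M u = 0"
begin

lemma int_wM: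
  assumes wm: "w \<in> borel_measurable borel" and wb: "\<And>u. \<bar>u\<bar> \<le> R \<Longrightarrow> \<bar>w u\<bar> \<le> C"
  shows "integrable lborel (\<lambda>u. w u * M u)"
proof (rule Bochner_Integration.integrable_bound[where f="\<lambda>u. (\<bar>C\<bar> * K) * indicator {-R..R} u"])
  show "integrable lborel (\<lambda>u. (\<bar>C\<bar> * K) * indicator {-R..R} u :: real)"
    by (intro integrable_mult_right) (auto intro!: integrable_real_indicator simp: emeasure_lborel_Icc_eq)
  show "(\<lambda>u. w u * M u) \<in> borel_measurable lborel" using wm Mmeas by simp
  show "AE u in lborel. norm (w u * M u) \<le> norm (\<bar>C\<bar> * K * indicator {-R..R} u :: real)"
  proof (rule AE_I2)
    fix u
    show "norm (w u * M u) \<le> norm (\<bar>C\<bar> * K * indicator {-R..R} u :: real)"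
    proof (cases "\<bar>u\<bar> \<le> R")
      case True
      have "\<bar>w u\<bar> * M u \<le> \<bar>C\<bar> * K"
        by (rule mult_mono) (use wb[OF True] MK Mnn in auto)
      moreover have "K \<ge> 0" using Mnn[of u] MK[of u] by linarith
      ultimately show ?thesis using True Mnn[of u]
        by (auto simp: indicator_def abs_mult)
    next
      case False
      then show ?thesis using Msupp[of u] by simp
    qed
  qed
qed

lemma conv_abs: "conv abs M x = (\<integral>u. \<bar>x - u\<bar> * M u \<partial>lborel)"
proof -
  have "conv abs M x = (\<integral>y. \<bar>y\<bar> * M (x - y) \<partial>lborel)" by (simp add: conv_def)
  also have "\<dots> = (\<integral>u. \<bar>x + -1 * u\<bar> * M (x - (x + -1 * u)) \<partial>lborel)"
    by (subst lborel_integral_real_affine[where c="-1" and t=x]) simp_all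
  also have "\<dots> = (\<integral>u. \<bar>x - u\<bar> * M u \<partial>lborel)" by simp
  finally show ?thesis .
qed

definition FF where "FF x = (\<integral>u. \<bar>x - u\<bar> * M u \<partial>lborel)"
definition SS where "SS x = (\<integral>u. sgn (x - u) * M u \<partial>lborel)"

lemma iF: "integrable lborel (\<lambda>u. \<bar>x - u\<bar> * M u)"
  by (rule int_wM[where C="\<bar>x\<bar> + R"]) auto

lemma iS: "integrable lborel (\<lambda>u. sgn (x - u) * M u)"
  by (rule int_wM[where C=1]) (auto simp: sgn_if)

lemma repr: "(\<integral>u. (\<bar>z - u\<bar> - \<bar>w - u\<bar> - sgn (w - u) * c) * M u \<partial>lborel) = FF z - FF w - c * SS w"
proof -
  have "(\<integral>u. (\<bar>z - u\<bar> - \<bar>w - u\<bar> - sgn (w - u) * c) * M u \<partial>lborel)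
      = (\<integral>u. \<bar>z - u\<bar> * M u - \<bar>w - u\<bar> * M u - c * (sgn (w - u) * M u) \<partial>lborel)"
    by (rule Bochner_Integration.integral_cong) (simp_all add: algebra_simps)
  also have "\<dots> = FF z - FF w - c * SS w"
    unfolding FF_def SS_def using iF iS by simp
  finally show ?thesis .
qed

lemma iK: "integrable lborel (\<lambda>u. (\<bar>z - u\<bar> - \<bar>w - u\<bar> - sgn (w - u) * c) * M u)"
proof -
  have "integrable lborel (\<lambda>u. \<bar>z - u\<bar> * M u - \<bar>w - u\<bar> * M u - c * (sgn (w - u) * M u))"
    using iF iS by simp
  then show ?thesis by (simp add: algebra_simps)
qed

lemma T1: "FF w + SS w * (z - w) \<le> FF z"
proof -
  have "0 \<le> (\<integral>u. (\<bar>z - u\<bar> - \<bar>w - u\<bar> - sgn (w - u) * (z - w)) * M u \<partial>lborel)"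
  proof (rule Bochner_Integration.integral_nonneg)
    fix u
    have "0 \<le> \<bar>z - u\<bar> - \<bar>w - u\<bar> - sgn (w - u) * (z - w)"
      by (auto simp: sgn_if abs_if)
    then show "0 \<le> (\<bar>z - u\<bar> - \<bar>w - u\<bar> - sgn (w - u) * (z - w)) * M u"
      using Mnn[of u] by simp
  qed
  then show ?thesis unfolding repr by (simp add: algebra_simps)
qed

lemma T2:
  assumes half: "\<And>u. M u \<le> 1/2"
  shows "FF z \<le> FF x + SS x * (z - x) + (z - x)^2/2"
proof -
  define k where "k u = \<bar>z - u\<bar> - \<bar>x - u\<bar> - sgn (x - u) * (z - x)" for u
  have kn: "0 \<le> k u" for u unfolding k_def by (auto simp: sgn_if abs_if)
  obtain bf where bfi: "integrable lborel bf" and bfv: "integral\<^sup>L lborel bf = (z - x)^2/2"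
    and bfb: "\<And>u. k u / 2 \<le> bf u"
  proof (cases "x \<le> z")
    case True
    show ?thesis
    proof (rule that[of "\<lambda>u. indicator {x..z} u *\<^sub>R (z - u)"])
      show "integrable lborel (\<lambda>u. indicator {x..z} u *\<^sub>R (z - u))"
      proof -
        have "continuous_on {x..z} (\<lambda>u. z - u)" by (intro continuous_intros)
        from borel_integrable_atLeastAtMost'[OF this] show ?thesis unfolding set_integrable_def by simp
      qed
      show "(\<integral>u. indicator {x..z} u *\<^sub>R (z - u) \<partial>lborel) = (z - x)^2/2" using tri1[OF True] .
      fix u show "k u / 2 \<le> indicator {x..z} u *\<^sub>R (z - u)"
        using True unfolding k_def by (auto simp: sgn_if abs_if indicator_def)
    qed
  next
    case False
    show ?thesis
    proof (rule that[of "\<lambda>u. indicator {z..x} u *\<^sub>R (u - z)"])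
      show "integrable lborel (\<lambda>u. indicator {z..x} u *\<^sub>R (u - z))"
      proof -
        have "continuous_on {z..x} (\<lambda>u. u - z)" by (intro continuous_intros)
        from borel_integrable_atLeastAtMost'[OF this] show ?thesis unfolding set_integrable_def by simp
      qed
      have "z \<le> x" using False by simp
      from tri2[OF this] show "(\<integral>u. indicator {z..x} u *\<^sub>R (u - z) \<partial>lborel) = (z - x)^2/2"
        by (simp add: power2_commute)
      fix u show "k u / 2 \<le> indicator {z..x} u *\<^sub>R (u - z)"
        using False unfolding k_def by (auto simp: sgn_if abs_if indicator_def)
    qed
  qed
  have "(\<integral>u. k u * M u \<partial>lborel) \<le> integral\<^sup>L lborel bf"
  proof (rule integral_mono)
    show "integrable lborel (\<lambda>u. k u * M u)" unfolding k_def by (rule iK)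
    show "integrable lborel bf" by (rule bfi)
    fix u
    have "k u * M u \<le> k u * (1/2)" by (rule mult_left_mono[OF half kn])
    then show "k u * M u \<le> bf u" using bfb[of u] by simp
  qed
  then have "FF z - FF x - (z - x) * SS x \<le> (z - x)^2/2"
    unfolding bfv using repr[of z x "z - x"] unfolding k_def by simp
  then show ?thesis by (simp add: algebra_simps)
qed

lemma conv_lower:
  assumes h: "0 < h" and c: "0 \<le> c" and Mc: "\<And>u. \<bar>u\<bar> \<le> h \<Longrightarrow> c \<le> M u"
  shows "2 * c * h^2 \<le> FF h + FF (-h) - 2 * FF 0"
proof -
  have eq: "FF h + FF (-h) - 2 * FF 0 = (\<integral>u. (\<bar>h - u\<bar> + \<bar>-h - u\<bar> - 2 * \<bar>0 - u\<bar>) * M u \<partial>lborel)"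
  proof -
    have "(\<integral>u. (\<bar>h - u\<bar> + \<bar>-h - u\<bar> - 2 * \<bar>0 - u\<bar>) * M u \<partial>lborel)
        = (\<integral>u. \<bar>h - u\<bar> * M u + \<bar>-h - u\<bar> * M u - 2 * (\<bar>0 - u\<bar> * M u) \<partial>lborel)"
      by (rule Bochner_Integration.integral_cong) (simp_all add: algebra_simps)
    also have "\<dots> = FF h + FF (-h) - 2 * FF 0" unfolding FF_def using iF[of h] iF[of "-h"] iF[of 0] by simp
    finally show ?thesis by simp
  qed
  have "(\<integral>u. indicator {-h..h} u *\<^sub>R (2 * c * (h - \<bar>u\<bar>)) \<partial>lborel)
      \<le> (\<integral>u. (\<bar>h - u\<bar> + \<bar>-h - u\<bar> - 2 * \<bar>0 - u\<bar>) * M u \<partial>lborel)"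
  proof (rule integral_mono)
    show "integrable lborel (\<lambda>u. indicator {-h..h} u *\<^sub>R (2 * c * (h - \<bar>u\<bar>)))"
    proof -
      have "continuous_on {-h..h} (\<lambda>u. 2 * c * (h - \<bar>u\<bar>))" by (intro continuous_intros)
      from borel_integrable_atLeastAtMost'[OF this] show ?thesis unfolding set_integrable_def by simp
    qed
    show "integrable lborel (\<lambda>u. (\<bar>h - u\<bar> + \<bar>-h - u\<bar> - 2 * \<bar>0 - u\<bar>) * M u)"
      by (rule int_wM[where C="2 * \<bar>h\<bar> + 4 * R"]) auto
    fix u
    show "indicator {-h..h} u *\<^sub>R (2 * c * (h - \<bar>u\<bar>)) \<le> (\<bar>h - u\<bar> + \<bar>-h - u\<bar> - 2 * \<bar>0 - u\<bar>) * M u"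
    proof (cases "\<bar>u\<bar> \<le> h")
      case True
      have e: "\<bar>h - u\<bar> + \<bar>-h - u\<bar> - 2 * \<bar>0 - u\<bar> = 2 * (h - \<bar>u\<bar>)" using True by auto
      have "2 * (h - \<bar>u\<bar>) * c \<le> 2 * (h - \<bar>u\<bar>) * M u"
        by (rule mult_left_mono[OF Mc[OF True]]) (use True in simp)
      moreover have ind: "indicator {-h..h} u = (1::real)" using True by (auto simp: indicator_def)
      ultimately show ?thesis unfolding e ind by (simp add: ac_simps)
    next
      case False
      have "0 \<le> \<bar>h - u\<bar> + \<bar>-h - u\<bar> - 2 * \<bar>0 - u\<bar>" by auto
      then have "0 \<le> (\<bar>h - u\<bar> + \<bar>-h - u\<bar> - 2 * \<bar>0 - u\<bar>) * M u" using Mnn[of u] by simp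
      moreover have ind: "indicator {-h..h} u = (0::real)" using False by (auto simp: indicator_def)
      ultimately show ?thesis unfolding ind by simp
    qed
  qed
  then show ?thesis unfolding eq using tent[of h "2 * c"] h by simp
qed

end



lemma moreau_mid:
  fixes f :: "real \<Rightarrow> real" and h :: real
  assumes mm: "\<forall>x. is_moreau_min g x (ereal (f x))"
  shows "f h + f (-h) - 2 * f 0 \<le> h^2"
proof -
  obtain y0 where e: "ereal (f 0) = ereal ((0 - y0)^2/2) + g y0"
    using mm[rule_format, of 0] unfolding is_moreau_min_def by blast
  have g0: "g y0 = ereal (f 0 - (0-y0)^2/2)" using e by (cases "g y0") auto
  have "ereal (f h) \<le> ereal ((h - y0)^2/2) + g y0"
    using mm[rule_format, of h] unfolding is_moreau_min_def by blast
  then have 1: "f h \<le> (h-y0)^2/2 + (f 0 - (0-y0)^2/2)" using g0 by simp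
  have "ereal (f (-h)) \<le> ereal ((-h - y0)^2/2) + g y0"
    using mm[rule_format, of "-h"] unfolding is_moreau_min_def by blast
  then have 2: "f (-h) \<le> (-h-y0)^2/2 + (f 0 - (0-y0)^2/2)" using g0 by simp
  have 3: "(h-y0)^2/2 + (-h-y0)^2/2 - 2 * ((0-y0)^2/2) = h^2"
    by (simp add: power2_eq_square field_simps)
  show ?thesis using 1 2 3 by linarith
qed

theorem mainTheorem15:
  fixes m :: nat and eps :: real
  assumes "m \<ge> 1" and "eps > 0"
  shows "(\<exists>g :: real \<Rightarrow> ereal. proper_fun g \<and> convex_fun g \<and> lsc_fun g \<and>
            (\<forall>x. is_moreau_min g x (ereal (conv abs (bspline_scaled m eps) x))))
         \<longleftrightarrow> eps \<ge> 2 * bspline m 0"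
proof -
  have ep: "0 < eps" by fact
  obtain n where m: "m = Suc n" using assms(1) by (cases m) auto
  define B where "B = bspline m"
  have Bm: "B \<in> borel_measurable borel" and Bn: "\<And>x. 0 \<le> B x" and B1: "\<And>x. B x \<le> 1"
    and Bs: "\<And>x. real m < \<bar>x\<bar> \<Longrightarrow> B x = 0"
    and Bmo: "\<And>x x'. \<bar>x\<bar> \<le> \<bar>x'\<bar> \<Longrightarrow> B x' \<le> B x" and Bc: "isCont B 0"
    using bspline_props[of n] unfolding B_def m by auto
  define M where "M = bspline_scaled m eps"
  have Mx: "M x = B (x / eps) / eps" for x unfolding M_def B_def bspline_scaled_def by simp
  have Mfun: "M = (\<lambda>x. B (x / eps) / eps)" using Mx by auto
  have Mmeas: "M \<in> borel_measurable borel" unfolding Mfun using Bm by measurable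
  have Mnn: "\<And>u. 0 \<le> M u" unfolding Mx using Bn ep by simp
  have MK: "\<And>u. M u \<le> 1/eps" unfolding Mx using B1 ep by (simp add: divide_right_mono)
  have Msupp: "\<And>u. real m * eps < \<bar>u\<bar> \<Longrightarrow> M u = 0"
  proof -
    fix u assume "real m * eps < \<bar>u\<bar>"
    then have "real m < \<bar>u / eps\<bar>" using ep by (simp add: field_simps)
    then show "M u = 0" unfolding Mx using Bs by simp
  qed
  have Mmax: "M u \<le> M 0" for u unfolding Mx using Bmo[of 0 "u/eps"] ep by (simp add: divide_right_mono)
  have Mc: "isCont M 0"
  proof -
    have "isCont (\<lambda>x. B (x / eps)) 0"
      by (rule isCont_o2[where f="\<lambda>x. x / eps" and a=0 and g=B]) (use Bc ep in \<open>auto intro!: continuous_intros\<close>)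
    then show ?thesis unfolding Mfun using ep by (auto intro!: continuous_intros)
  qed
  note ctx = Mmeas Mnn MK Msupp
  have conv_eq: "conv abs (bspline_scaled m eps) x = FF M x" for x
    using conv_abs[where K="1/eps" and R="real m * eps", OF ctx, of x] FF_def[where K="1/eps" and R="real m * eps", OF ctx, of x] by (simp add: M_def)
  have M0: "M 0 = B 0 / eps" unfolding Mx by simp
  show ?thesis
  proof
    assume "\<exists>g :: real \<Rightarrow> ereal. proper_fun g \<and> convex_fun g \<and> lsc_fun g \<and>
            (\<forall>x. is_moreau_min g x (ereal (conv abs (bspline_scaled m eps) x)))"
    then obtain g where mm: "\<forall>x. is_moreau_min g x (ereal (FF M x))" unfolding conv_eq by blast
    have mid: "FF M h + FF M (-h) - 2 * FF M 0 \<le> h^2" for h by (rule moreau_mid[OF mm])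
    show "eps \<ge> 2 * bspline m 0"
    proof (rule ccontr)
      assume "\<not> eps \<ge> 2 * bspline m 0"
      then have big: "1/2 < M 0" unfolding M0 B_def using ep by (simp add: field_simps)
      define c where "c = (M 0 + 1/2) / 2"
      have c1: "1/2 < c" "c < M 0" using big unfolding c_def by auto
      obtain d where d: "0 < d" "\<And>u. dist u 0 < d \<Longrightarrow> dist (M u) (M 0) < M 0 - c"
        using Mc[unfolded continuous_at_eps_delta, rule_format, of "M 0 - c"] c1 by auto
      define h where "h = d / 2"
      have hp: "0 < h" using d unfolding h_def by simp
      have Mc': "c \<le> M u" if "\<bar>u\<bar> \<le> h" for u
      proof -
        have "dist u 0 < d" using that d(1) unfolding h_def by (simp add: dist_real_def)
        then have "\<bar>M u - M 0\<bar> < M 0 - c" using d(2) by (simp add: dist_real_def)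
        then show ?thesis by linarith
      qed
      have c0: "0 \<le> c" using c1 by linarith
      have "2 * c * h^2 \<le> FF M h + FF M (-h) - 2 * FF M 0"
        by (rule conv_lower[where K="1/eps" and R="real m * eps", OF ctx hp c0 Mc'])
      with mid[of h] have "2 * c * h^2 \<le> h^2" by linarith
      moreover have "h^2 < 2 * c * h^2" using hp c1 by simp
      ultimately show False by linarith
    qed
  next
    assume "eps \<ge> 2 * bspline m 0"
    then have b2: "bspline m 0 / eps \<le> 1/2" using ep by (simp add: field_simps)
    have half: "M u \<le> 1/2" for u
      using Mmax[of u] b2 unfolding M0 B_def by linarith
    have "\<exists>g. proper_fun g \<and> convex_fun g \<and> lsc_fun g \<and> (\<forall>x. is_moreau_min g x (ereal (FF M x)))"
      by (rule moreau_from_tangent[OF T1[where K="1/eps" and R="real m * eps", OF ctx] T2[where K="1/eps" and R="real m * eps", OF ctx half]])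
    then show "\<exists>g :: real \<Rightarrow> ereal. proper_fun g \<and> convex_fun g \<and> lsc_fun g \<and>
            (\<forall>x. is_moreau_min g x (ereal (conv abs (bspline_scaled m eps) x)))"
      unfolding conv_eq .
  qed
qed


end
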